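(* For $n\ge2$ agents with identical additive valuations, every online algorithm that in each round $t$ outputs a contiguous EF1 allocation of $M_t$ requires $\Omega(nT)$ adjustments in the worst case (for $T$ sufficiently large compared with $n$).
   Context: Items $g_1,\dots,g_T$ arrive online on a line; $M_t=\{g_1,\dots,g_t\}$. A contiguous allocation of $M_t$ assigns agent $i$ the $i$-th block from the left. EF1: for all $i,j$, $A_j=\emptyset$ or some $g\in A_j$ has $v(A_i)\ge v(A_j\setminus\{g\})$. The number of adjustments is $\sum_{t=1}^{T-1}|\{g\in M_t: g \text{ is assigned to different agents in } A^t \text{ and } A^{t+1}\}|$. *)

theory Defs
  imports Complex_Main
begin

(* Items are indexed 0,1,2,...; an instance is the list of (common, additive) item values.
   An allocation of the first t items to n agents (agents 0..n-1) is a map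
   item index -> agent. *)

definition bundle_of :: "nat \<Rightarrow> (nat \<Rightarrow> nat) \<Rightarrow> nat \<Rightarrow> nat set" where
  "bundle_of t a i = {g. g < t \<and> a g = i}"

definition val :: "real list \<Rightarrow> nat set \<Rightarrow> real" where
  "val xs S = (\<Sum>g\<in>S. xs ! g)"

(* contiguous: agent i receives the i-th block from the left (blocks may be empty) *)
definition contiguous_alloc :: "nat \<Rightarrow> nat \<Rightarrow> (nat \<Rightarrow> nat) \<Rightarrow> bool" where
  "contiguous_alloc n t a \<longleftrightarrow>
     (\<forall>g<t. a g < n) \<and> (\<forall>g g'. g \<le> g' \<and> g' < t \<longrightarrow> a g \<le> a g')"

definition EF1 :: "nat \<Rightarrow> real list \<Rightarrow> (nat \<Rightarrow> nat) \<Rightarrow> bool" where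
  "EF1 n xs a \<longleftrightarrow>
     (\<forall>i<n. \<forall>j<n. bundle_of (length xs) a j = {} \<or>
        (\<exists>g\<in>bundle_of (length xs) a j.
            val xs (bundle_of (length xs) a i) \<ge> val xs (bundle_of (length xs) a j - {g})))"

(* An online algorithm: the allocation output in round t depends only on the values
   of the items g_1..g_t seen so far, i.e. it is  alg (take t xs). *)
definition valid_online_alg :: "nat \<Rightarrow> (real list \<Rightarrow> nat \<Rightarrow> nat) \<Rightarrow> bool" where
  "valid_online_alg n alg \<longleftrightarrow>
     (\<forall>xs. (\<forall>x\<in>set xs. x \<ge> 0) \<longrightarrow>
        contiguous_alloc n (length xs) (alg xs) \<and> EF1 n xs (alg xs))"

definition adjustments :: "(real list \<Rightarrow> nat \<Rightarrow> nat) \<Rightarrow> real list \<Rightarrow> nat" where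
  "adjustments alg xs =
     (\<Sum>t\<in>{1..<length xs}.
        card {g. g < t \<and> alg (take t xs) g \<noteq> alg (take (Suc t) xs) g})"

end

theory Submission
  imports Defs
begin

lemma val_ones:
  assumes "S \<subseteq> {..<t}"
  shows "val (replicate t 1) S = real (card S)"
proof -
  have "(\<Sum>g\<in>S. replicate t (1::real) ! g) = (\<Sum>g\<in>S. (1::real))"
    by (rule sum.cong) (use assms in auto)
  then show ?thesis unfolding val_def by simp
qed

lemma bundle_sub: "bundle_of t a i \<subseteq> {..<t}"
  by (auto simp: bundle_of_def)

lemma card_prefix:
  "card {g. g < t \<and> a g < k} = (\<Sum>i<k. card (bundle_of t a i))"
proof (induction k)
  case 0
  then show ?case by simp
next
  case (Suc k)
  have e: "{g. g < t \<and> a g < Suc k} = {g. g < t \<and> a g < k} \<union> bundle_of t a k"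
    by (auto simp: bundle_of_def)
  have d: "{g. g < t \<and> a g < k} \<inter> bundle_of t a k = {}"
    by (auto simp: bundle_of_def)
  have f1: "finite {g. g < t \<and> a g < k}" by simp
  have f2: "finite (bundle_of t a k)" by (rule finite_subset[OF bundle_sub]) simp
  show ?case unfolding e using card_Un_disjoint[OF f1 f2 d] Suc by simp
qed

lemma EF1_card:
  assumes "EF1 n (replicate t 1) a" "i < n" "j < n"
  shows "card (bundle_of t a j) \<le> card (bundle_of t a i) + 1"
proof -
  have fj: "finite (bundle_of t a j)" by (rule finite_subset[OF bundle_sub]) simp
  from assms have "bundle_of t a j = {} \<or>
        (\<exists>g\<in>bundle_of t a j.
            val (replicate t 1) (bundle_of t a i) \<ge> val (replicate t 1) (bundle_of t a j - {g}))"
    unfolding EF1_def by simp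
  then show ?thesis
  proof
    assume "bundle_of t a j = {}" then show ?thesis by simp
  next
    assume "\<exists>g\<in>bundle_of t a j.
            val (replicate t 1) (bundle_of t a i) \<ge> val (replicate t 1) (bundle_of t a j - {g})"
    then obtain g where g: "g \<in> bundle_of t a j"
      and v: "val (replicate t 1) (bundle_of t a i) \<ge> val (replicate t 1) (bundle_of t a j - {g})"
      by blast
    have "val (replicate t 1) (bundle_of t a i) = real (card (bundle_of t a i))"
      by (rule val_ones[OF bundle_sub])
    moreover have "val (replicate t 1) (bundle_of t a j - {g}) = real (card (bundle_of t a j - {g}))"
      by (rule val_ones) (auto simp: bundle_of_def)
    moreover have "card (bundle_of t a j - {g}) = card (bundle_of t a j) - 1"
      using g fj by simp
    ultimately show ?thesis using v by linarith
  qed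
qed

lemma bundle_bounds:
  assumes "EF1 n (replicate t 1) a" "\<forall>g<t. a g < n" "j < n"
  shows "n * card (bundle_of t a j) \<le> t + n" and "t \<le> n * card (bundle_of t a j) + n"
proof -
  have "{g. g < t \<and> a g < n} = {..<t}" using assms(2) by auto
  then have tot: "(\<Sum>i<n. card (bundle_of t a i)) = t"
    using card_prefix[of t a n] by simp
  have "n * card (bundle_of t a j) = (\<Sum>i<n. card (bundle_of t a j))" by simp
  also have "\<dots> \<le> (\<Sum>i<n. card (bundle_of t a i) + 1)"
    by (rule sum_mono) (use EF1_card[OF assms(1) _ assms(3)] in auto)
  also have "\<dots> = t + n" using tot by (simp add: sum_Suc)
  finally show "n * card (bundle_of t a j) \<le> t + n" .
  have "t = (\<Sum>i<n. card (bundle_of t a i))" using tot by simp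
  also have "\<dots> \<le> (\<Sum>i<n. card (bundle_of t a j) + 1)"
    by (rule sum_mono) (use EF1_card[OF assms(1) assms(3)] in auto)
  also have "\<dots> = n * card (bundle_of t a j) + n" by simp
  finally show "t \<le> n * card (bundle_of t a j) + n" .
qed

lemma prefix_bounds:
  assumes "EF1 n (replicate t 1) a" "\<forall>g<t. a g < n" "k \<le> n"
  shows "n * card {g. g < t \<and> a g < k} \<le> k * (t + n)"
    and "k * t \<le> n * card {g. g < t \<and> a g < k} + k * n"
proof -
  have "n * card {g. g < t \<and> a g < k} = (\<Sum>i<k. n * card (bundle_of t a i))"
    by (simp add: card_prefix sum_distrib_left)
  also have "\<dots> \<le> (\<Sum>i<k. t + n)"
    by (rule sum_mono) (use bundle_bounds[OF assms(1,2)] assms(3) in auto)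
  also have "\<dots> = k * (t + n)" by simp
  finally show "n * card {g. g < t \<and> a g < k} \<le> k * (t + n)" .
  have "k * t = (\<Sum>i<k. t)" by simp
  also have "\<dots> \<le> (\<Sum>i<k. n * card (bundle_of t a i) + n)"
    by (rule sum_mono) (use bundle_bounds[OF assms(1,2)] assms(3) in auto)
  also have "\<dots> = n * card {g. g < t \<and> a g < k} + k * n"
    by (simp add: card_prefix sum_distrib_left sum.distrib)
  finally show "k * t \<le> n * card {g. g < t \<and> a g < k} + k * n" .
qed

lemma valid_facts:
  assumes "valid_online_alg n alg"
  shows "contiguous_alloc n t (alg (replicate t 1)) \<and> EF1 n (replicate t 1) (alg (replicate t 1))"
proof -
  have "\<forall>x\<in>set (replicate t (1::real)). x \<ge> 0" by simp
  then have "contiguous_alloc n (length (replicate t (1::real))) (alg (replicate t 1)) \<and> EF1 n (replicate t 1) (alg (replicate t 1))"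
    using assms unfolding valid_online_alg_def by blast
  then show ?thesis by simp
qed


lemma jump:
  assumes v: "valid_online_alg n alg" and t: "4*n*n \<le> t" and g: "g < t"
  shows "alg (replicate (Suc t) 1) g \<le> alg (replicate t 1) g + 1 \<and>
         alg (replicate t 1) g \<le> alg (replicate (Suc t) 1) g + 1"
proof -
  define a where "a = alg (replicate t 1)"
  define a' where "a' = alg (replicate (Suc t) 1)"
  have f: "contiguous_alloc n t a" "EF1 n (replicate t 1) a" using valid_facts[OF v, of t] a_def by auto
  have f': "contiguous_alloc n (Suc t) a'" "EF1 n (replicate (Suc t) 1) a'"
    using valid_facts[OF v, of "Suc t"] a'_def by auto
  have ran: "\<forall>h<t. a h < n" and mono: "\<And>h h'. h \<le> h' \<Longrightarrow> h' < t \<Longrightarrow> a h \<le> a h'"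
    using f(1) unfolding contiguous_alloc_def by auto
  have ran': "\<forall>h<Suc t. a' h < n" and mono': "\<And>h h'. h \<le> h' \<Longrightarrow> h' < Suc t \<Longrightarrow> a' h \<le> a' h'"
    using f'(1) unfolding contiguous_alloc_def by auto
  have up: "a' g \<le> a g + 1"
  proof (rule ccontr)
    assume "\<not> a' g \<le> a g + 1"
    then have ij: "a g + 2 \<le> a' g" by simp
    define i where "i = a g"
    have sub: "{h. h < Suc t \<and> a' h < i+2} \<subseteq> {h. h < t \<and> a h < i+1}"
    proof
      fix h assume h: "h \<in> {h. h < Suc t \<and> a' h < i+2}"
      have "h < g"
      proof (rule ccontr)
        assume "\<not> h < g" then have "a' g \<le> a' h" using mono'[of g h] h by auto
        then show False using h ij i_def by simp
      qed
      then show "h \<in> {h. h < t \<and> a h < i+1}" using mono[of h g] g i_def by auto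
    qed
    have c: "card {h. h < Suc t \<and> a' h < i+2} \<le> card {h. h < t \<and> a h < i+1}"
      by (rule card_mono[OF _ sub]) simp
    have "a' g < n" using ran' g by simp
    then have in_: "i + 2 \<le> n" using ij i_def by simp
    have b1: "(i+2) * Suc t \<le> n * card {h. h < Suc t \<and> a' h < i+2} + (i+2) * n"
      using prefix_bounds(2)[OF f'(2) ran' in_] .
    have b2: "n * card {h. h < t \<and> a h < i+1} \<le> (i+1) * (t + n)"
      using prefix_bounds(1)[OF f(2) ran, of "i+1"] in_ by simp
    have "n * card {h. h < Suc t \<and> a' h < i+2} \<le> n * card {h. h < t \<and> a h < i+1}"
      using c by simp
    then have "(i+2) * Suc t \<le> (i+1) * (t + n) + (i+2) * n" using b1 b2 by linarith
    then have "t + i + 2 \<le> (2*i+3) * n" by (simp add: algebra_simps)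
    moreover have "(2*i+3) * n \<le> (2*n) * n" by (rule mult_right_mono) (use in_ in simp_all)
    ultimately have "t < 2*n*n" by linarith
    then show False using t by simp
  qed
  have down: "a g \<le> a' g + 1"
  proof (rule ccontr)
    assume "\<not> a g \<le> a' g + 1"
    then have ij: "a' g + 2 \<le> a g" by simp
    define i where "i = a' g"
    have sub: "{h. h < t \<and> a h < i+2} \<subseteq> {h. h < Suc t \<and> a' h < i+1}"
    proof
      fix h assume h: "h \<in> {h. h < t \<and> a h < i+2}"
      have "h < g"
      proof (rule ccontr)
        assume "\<not> h < g" then have "a g \<le> a h" using mono[of g h] h by auto
        then show False using h ij i_def by simp
      qed
      then show "h \<in> {h. h < Suc t \<and> a' h < i+1}" using mono'[of h g] g i_def by auto
    qed
    have c: "card {h. h < t \<and> a h < i+2} \<le> card {h. h < Suc t \<and> a' h < i+1}"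
      by (rule card_mono[OF _ sub]) simp
    have "a g < n" using ran g by simp
    then have in_: "i + 2 \<le> n" using ij i_def by simp
    have b1: "(i+2) * t \<le> n * card {h. h < t \<and> a h < i+2} + (i+2) * n"
      using prefix_bounds(2)[OF f(2) ran in_] .
    have b2: "n * card {h. h < Suc t \<and> a' h < i+1} \<le> (i+1) * (Suc t + n)"
      using prefix_bounds(1)[OF f'(2) ran', of "i+1"] in_ by simp
    have "n * card {h. h < t \<and> a h < i+2} \<le> n * card {h. h < Suc t \<and> a' h < i+1}"
      using c by simp
    then have "(i+2) * t \<le> (i+1) * (Suc t + n) + (i+2) * n" using b1 b2 by linarith
    then have "t \<le> (i+1) + (2*i+3) * n" by (simp add: algebra_simps)
    moreover have "(2*i+3) * n \<le> (2*n) * n" by (rule mult_right_mono) (use in_ in simp_all)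
    moreover have "n \<le> n * n" using in_ by simp
    moreover have "(2*n)*n = 2*(n*n)" "4*n*n = 4*(n*n)" by simp_all
    ultimately have "t < 4*n*n" using in_ by linarith
    then show False using t by simp
  qed
  show ?thesis using up down a_def a'_def by simp
qed


lemma last_item:
  assumes v: "valid_online_alg n alg" and n: "n \<ge> 2" and t: "n \<le> t"
  shows "n - 1 \<le> alg (replicate (Suc t) 1) t"
proof -
  define a' where "a' = alg (replicate (Suc t) 1)"
  have f': "contiguous_alloc n (Suc t) a'" "EF1 n (replicate (Suc t) 1) a'"
    using valid_facts[OF v, of "Suc t"] a'_def by auto
  have ran': "\<forall>h<Suc t. a' h < n" and mono': "\<And>h h'. h \<le> h' \<Longrightarrow> h' < Suc t \<Longrightarrow> a' h \<le> a' h'"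
    using f'(1) unfolding contiguous_alloc_def by auto
  have "Suc t \<le> n * card (bundle_of (Suc t) a' (n-1)) + n"
    using bundle_bounds(2)[OF f'(2) ran', of "n-1"] n by simp
  then have "card (bundle_of (Suc t) a' (n-1)) \<noteq> 0"
  proof (intro notI)
    assume "Suc t \<le> n * card (bundle_of (Suc t) a' (n - 1)) + n" "card (bundle_of (Suc t) a' (n-1)) = 0"
    then show False using t by simp
  qed
  then have "bundle_of (Suc t) a' (n-1) \<noteq> {}" by (intro notI) simp
  then obtain h where "h \<in> bundle_of (Suc t) a' (n-1)" by blast
  then have "h < Suc t" "a' h = n - 1" by (auto simp: bundle_of_def)
  then show ?thesis using mono'[of h t] a'_def by simp
qed

definition Sc :: "(real list \<Rightarrow> nat \<Rightarrow> nat) \<Rightarrow> nat \<Rightarrow> nat \<Rightarrow> nat" where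
  "Sc alg t k = card {g. g < t \<and> alg (replicate t 1) g < k}"

lemma step:
  assumes v: "valid_online_alg n alg" and n: "n \<ge> 2" and t: "4*n*n \<le> t"
  shows "(\<Sum>k\<in>{1..<n}. real (Sc alg (Suc t) k) - real (Sc alg t k))
     \<le> real (card {g. g < t \<and> alg (replicate t 1) g \<noteq> alg (replicate (Suc t) 1) g})"
proof -
  define a where "a = alg (replicate t 1)"
  define a' where "a' = alg (replicate (Suc t) 1)"
  define C where "C = {g. g < t \<and> a g \<noteq> a' g}"
  define D where "D k = {g. g < t \<and> (a g < k) \<noteq> (a' g < k)}" for k
  have nt: "n \<le> t"
  proof -
    have "n \<le> n * n" using n by simp
    then show ?thesis using t by linarith
  qed
  have lastt: "n - 1 \<le> a' t" using last_item[OF v n nt] a'_def by simp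
  have jmp: "\<And>g. g < t \<Longrightarrow> a' g \<le> a g + 1 \<and> a g \<le> a' g + 1"
    using jump[OF v t] a_def a'_def by blast
  have disj: "\<forall>k\<in>{1..<n}. \<forall>k'\<in>{1..<n}. k \<noteq> k' \<longrightarrow> D k \<inter> D k' = {}"
  proof (intro ballI impI)
    fix k k' :: nat assume "k \<noteq> k'"
    show "D k \<inter> D k' = {}"
    proof (rule ccontr)
      assume "D k \<inter> D k' \<noteq> {}"
      then obtain g where g: "g \<in> D k" "g \<in> D k'" by blast
      then have "g < t" by (simp add: D_def)
      from jmp[OF this] g \<open>k \<noteq> k'\<close> show False unfolding D_def by auto
    qed
  qed
  have finD: "\<forall>k\<in>{1..<n}. finite (D k)" by (simp add: D_def)
  have "(\<Sum>k\<in>{1..<n}. card (D k)) = card (\<Union>(D ` {1..<n}))"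
    using card_UN_disjoint[OF _ finD disj] by simp
  also have "\<dots> \<le> card C"
    by (rule card_mono) (auto simp: C_def D_def)
  finally have sumD: "(\<Sum>k\<in>{1..<n}. card (D k)) \<le> card C" .
  have each: "real (Sc alg (Suc t) k) - real (Sc alg t k) \<le> real (card (D k))" if k: "k \<in> {1..<n}" for k
  proof -
    have "{g. g < Suc t \<and> a' g < k} = {g. g < t \<and> a' g < k}"
      using lastt k by (auto simp: less_Suc_eq)
    then have e: "Sc alg (Suc t) k = card {g. g < t \<and> a' g < k}" by (simp add: Sc_def a'_def)
    have "{g. g < t \<and> a' g < k} \<subseteq> D k \<union> {g. g < t \<and> a g < k}" by (auto simp: D_def)
    then have "card {g. g < t \<and> a' g < k} \<le> card (D k \<union> {g. g < t \<and> a g < k})"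
      by (rule card_mono[rotated]) (simp add: D_def)
    also have "\<dots> \<le> card (D k) + card {g. g < t \<and> a g < k}" by (rule card_Un_le)
    finally show ?thesis using e by (simp add: Sc_def a_def)
  qed
  have "(\<Sum>k\<in>{1..<n}. real (Sc alg (Suc t) k) - real (Sc alg t k)) \<le> (\<Sum>k\<in>{1..<n}. real (card (D k)))"
    by (rule sum_mono) (rule each)
  also have "\<dots> = real (\<Sum>k\<in>{1..<n}. card (D k))" by simp
  also have "\<dots> \<le> real (card C)" using sumD by (simp only: of_nat_le_iff)
  finally show ?thesis by (simp add: C_def a_def a'_def)
qed


lemma gauss_real: "(\<Sum>k\<in>{1..<n}. real k) = real n * (real n - 1) / 2"
proof -
  have "(\<Sum>k\<in>{1..<n}. real k) = (\<Sum>k<n. real k)"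
    by (rule sum.mono_neutral_left) auto
  also have "\<dots> = real n * (real n - 1) / 2"
    by (induction n) (simp_all add: algebra_simps)
  finally show ?thesis .
qed

lemma Sc_bounds:
  assumes v: "valid_online_alg n alg" and k: "k \<le> n"
  shows "real n * real (Sc alg t k) \<le> real k * real t + real k * real n"
    and "real k * real t \<le> real n * real (Sc alg t k) + real k * real n"
proof -
  have f: "contiguous_alloc n t (alg (replicate t 1))" "EF1 n (replicate t 1) (alg (replicate t 1))"
    using valid_facts[OF v] by auto
  have ran: "\<forall>h<t. alg (replicate t 1) h < n" using f(1) unfolding contiguous_alloc_def by auto
  have "n * Sc alg t k \<le> k * (t + n)" using prefix_bounds(1)[OF f(2) ran k] by (simp add: Sc_def)
  then have "real (n * Sc alg t k) \<le> real (k * (t + n))" by linarith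
  then show "real n * real (Sc alg t k) \<le> real k * real t + real k * real n"
    by (simp add: algebra_simps)
  have "k * t \<le> n * Sc alg t k + k * n" using prefix_bounds(2)[OF f(2) ran k] by (simp add: Sc_def)
  then have "real (k * t) \<le> real (n * Sc alg t k + k * n)" by linarith
  then show "real k * real t \<le> real n * real (Sc alg t k) + real k * real n"
    by (simp add: algebra_simps)
qed

theorem mainTheorem10:
  "\<exists>c::real. c > 0 \<and>
     (\<forall>n::nat. n \<ge> 2 \<longrightarrow>
       (\<exists>T0::nat. \<forall>T\<ge>T0. \<forall>alg. valid_online_alg n alg \<longrightarrow>
          (\<exists>xs::real list. length xs = T \<and> (\<forall>x\<in>set xs. x \<ge> 0) \<and>
             real (adjustments alg xs) \<ge> c * real n * real T)))"
proof (intro exI[of _ "1/8"] conjI allI impI)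
  show "(0::real) < 1/8" by simp
  fix n :: nat assume n: "n \<ge> 2"
  show "\<exists>T0::nat. \<forall>T\<ge>T0. \<forall>alg. valid_online_alg n alg \<longrightarrow>
          (\<exists>xs::real list. length xs = T \<and> (\<forall>x\<in>set xs. x \<ge> 0) \<and>
             real (adjustments alg xs) \<ge> 1/8 * real n * real T)"
  proof (intro exI[of _ "8*n*n + 4*n"] allI impI)
    fix T alg assume T: "8*n*n + 4*n \<le> T" and v: "valid_online_alg n alg"
    define t1 where "t1 = 4*n*n"
    define C where "C t = card {g. g < t \<and> alg (replicate t 1) g \<noteq> alg (replicate (Suc t) 1) g}" for t
    define X where "X = real T - real t1 - 2 * real n"
    have t1ge: "1 \<le> t1" using n by (simp add: t1_def)
    have t1T: "t1 \<le> T" using T by (simp add: t1_def)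
    have adj: "adjustments alg (replicate T 1) = (\<Sum>t\<in>{1..<T}. C t)"
      unfolding adjustments_def C_def by (rule sum.cong) (auto simp: min_def)
    have "(\<Sum>t\<in>{t1..<T}. real (C t)) \<le> (\<Sum>t\<in>{1..<T}. real (C t))"
      by (rule sum_mono2) (use t1ge in auto)
    also have "\<dots> = real (adjustments alg (replicate T 1))" using adj by simp
    finally have A1: "(\<Sum>t\<in>{t1..<T}. real (C t)) \<le> real (adjustments alg (replicate T 1))" .
    have "(\<Sum>t\<in>{t1..<T}. \<Sum>k\<in>{1..<n}. real (Sc alg (Suc t) k) - real (Sc alg t k))
          \<le> (\<Sum>t\<in>{t1..<T}. real (C t))"
      by (rule sum_mono) (use step[OF v n] in \<open>auto simp: C_def t1_def\<close>)
    moreover have "(\<Sum>t\<in>{t1..<T}. \<Sum>k\<in>{1..<n}. real (Sc alg (Suc t) k) - real (Sc alg t k))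
          = (\<Sum>k\<in>{1..<n}. \<Sum>t\<in>{t1..<T}. real (Sc alg (Suc t) k) - real (Sc alg t k))"
      by (rule sum.swap)
    moreover have "\<dots> = (\<Sum>k\<in>{1..<n}. real (Sc alg T k) - real (Sc alg t1 k))"
      by (rule sum.cong) (use sum_Suc_diff'[OF t1T] in auto)
    ultimately have A2: "(\<Sum>k\<in>{1..<n}. real (Sc alg T k) - real (Sc alg t1 k))
        \<le> real (adjustments alg (replicate T 1))" using A1 by linarith
    have npos: "real n > 0" using n by simp
    have each: "real k * X / real n \<le> real (Sc alg T k) - real (Sc alg t1 k)" if k: "k \<in> {1..<n}" for k
    proof -
      have kn: "k \<le> n" using k by simp
      have "real k * X \<le> real n * (real (Sc alg T k) - real (Sc alg t1 k))"
        using Sc_bounds(1)[OF v kn, of t1] Sc_bounds(2)[OF v kn, of T]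
        by (simp add: X_def algebra_simps)
      then show ?thesis using npos by (simp add: pos_divide_le_eq mult.commute)
    qed
    have "(\<Sum>k\<in>{1..<n}. real k * X / real n) = X / real n * (\<Sum>k\<in>{1..<n}. real k)"
      by (simp add: sum_distrib_left sum_divide_distrib algebra_simps)
    also have "\<dots> = X * (real n - 1) / 2" unfolding gauss_real using npos by (simp add: field_simps)
    finally have A3: "X * (real n - 1) / 2 \<le> real (adjustments alg (replicate T 1))"
      using A2 sum_mono[of "{1..<n}" "\<lambda>k. real k * X / real n", OF each] by linarith
    have "real (8*n*n + 4*n) \<le> real T" using T by (simp only: of_nat_le_iff)
    then have XT: "real T / 2 \<le> X" by (simp add: X_def t1_def)
    have nn: "real n / 2 \<le> real n - 1" using n by simp
    have "(real T / 2) * (real n / 2) \<le> X * (real n - 1)"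
      by (rule mult_mono[OF XT nn]) (use n XT of_nat_0_le_iff[of T] in linarith)+
    then have "real n * real T / 4 \<le> X * (real n - 1)" by (simp add: mult.commute)
    then have "real n * real T / 8 \<le> real (adjustments alg (replicate T 1))" using A3 by linarith
    then have "1/8 * real n * real T \<le> real (adjustments alg (replicate T 1))" by simp
    then show "\<exists>xs::real list. length xs = T \<and> (\<forall>x\<in>set xs. x \<ge> 0) \<and>
             real (adjustments alg xs) \<ge> 1/8 * real n * real T"
      by (intro exI[of _ "replicate T 1"]) simp
  qed
qed

end
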